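(* Let $R$ be a multivariate convex risk measure and $v\in\mathbb{R}^J$. For every $u\in\mathbb{L}^J$, $$\inf\{\alpha\in\mathbb{R}\mid v+\alpha\mathbf{1}\in R(u)\}=\sup\Big\{\gamma^{\mathsf T}\big(\mathbb{E}^\mu[u]-v\big)-\beta(\mu,\gamma)\ \Big|\ \mu\in\mathbb{M}_1^J,\ \gamma\in\mathbb{R}^J_+,\ \gamma^{\mathsf T}\mathbf{1}=1\Big\}.$$
   Context: Probability space: $\Omega=\{1,\dots,I\}$, $I\ge 2$, with probabilities $p_i>0$. $\mathbb{L}^J$ denotes random vectors $u=(u_1,\dots,u_I)$, $u_i\in\mathbb{R}^J$; $u\le v$ means $u_i^j\le v_i^j$ for all $i,j$. $\mathbf{1}=(1,\dots,1)^{\mathsf T}\in\mathbb{R}^J$. A multivariate convex risk measure is a map $R:\mathbb{L}^J\to 2^{\mathbb{R}^J}$ such that: (A1) $u\le v$ implies $R(u)\supseteq R(v)$; (A2) $R(u+z)=R(u)+z$ for all $z\in\mathbb{R}^J$; (A3) $R(u)\notin\{\emptyset,\mathbb{R}^J\}$; (A4) $R(\gamma u+(1-\gamma)v)\supseteq\gamma R(u)+(1-\gamma)R(v)$ for $\gamma\in(0,1)$; (A5) the acceptance set $\mathcal{A}=\{u\in\mathbb{L}^J\mid 0\in R(u)\}$ is closed. $\mathbb{M}_1^J$ denotes the set of $J$-tuples $\mu=(\mu^1,\dots,\mu^J)$ of probability measures on $\Omega$, with $\mu_i=(\mu_i^1,\dots,\mu_i^J)^{\mathsf T}$, and $\mathbb{E}^\mu[u]=\sum_{i\in\Omega}\mu_i\cdot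 u_i$, where $\cdot$ is the componentwise (Hadamard) product. The minimal penalty function is $\beta(\mu,w)=\sup_{u\in\mathcal{A}}w^{\mathsf T}\mathbb{E}^\mu[u]$ for $\mu\in\mathbb{M}_1^J$, $w\in\mathbb{R}^J_+\setminus\{0\}$; it is known that $\inf_{z\in R(u)}w^{\mathsf T}z=\sup_{\mu\in\mathbb{M}_1^J}(w^{\mathsf T}\mathbb{E}^\mu[u]-\beta(\mu,w))$ for all $u$ and $w\in\mathbb{R}^J_+\setminus\{0\}$. *)

theory Defs
  imports "HOL-Analysis.Analysis"
begin

(* Omega = finite type 'i, components {1..J} = finite type 'j.
   A random vector u in L^J is u :: real^'j^'i, with u$i$j = u_i^j. *)

definition rv_le :: "real^'j^'i \<Rightarrow> real^'j^'i \<Rightarrow> bool" where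
  "rv_le u v \<longleftrightarrow> (\<forall>i j. u$i$j \<le> v$i$j)"

definition const_rv :: "real^'j \<Rightarrow> real^'j^'i" where
  "const_rv z = (\<chi> i. z)"

definition acceptance_set :: "(real^'j^'i \<Rightarrow> (real^'j) set) \<Rightarrow> (real^'j^'i) set" where
  "acceptance_set R = {u. 0 \<in> R u}"

definition mv_convex_risk_measure :: "(real^'j^'i \<Rightarrow> (real^'j) set) \<Rightarrow> bool" where
  "mv_convex_risk_measure R \<longleftrightarrow>
     (\<forall>u v. rv_le u v \<longrightarrow> R v \<subseteq> R u) \<and>
     (\<forall>u z. R (u + const_rv z) = (\<lambda>x. x + z) ` R u) \<and>
     (\<forall>u. R u \<noteq> {} \<and> R u \<noteq> UNIV) \<and>
     (\<forall>u v g. 0 < g \<and> g < 1 \<longrightarrow>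
        {g *\<^sub>R a + (1 - g) *\<^sub>R b | a b. a \<in> R u \<and> b \<in> R v}
          \<subseteq> R (g *\<^sub>R u + (1 - g) *\<^sub>R v)) \<and>
     closed (acceptance_set R)"

(* M_1^J: mu$i$j = mu^j({i}); each mu^j is a probability measure on Omega *)
definition M1 :: "(real^'j^'i) set" where
  "M1 = {\<mu>. (\<forall>i j. 0 \<le> \<mu>$i$j) \<and> (\<forall>j. (\<Sum>i\<in>UNIV. \<mu>$i$j) = 1)}"

definition expect :: "real^'j^'i \<Rightarrow> real^'j^'i \<Rightarrow> real^'j" where
  "expect \<mu> u = (\<chi> j. \<Sum>i\<in>UNIV. \<mu>$i$j * u$i$j)"

definition ones :: "real^'j" where
  "ones = (\<chi> j. 1)"

definition penalty :: "(real^'j^'i \<Rightarrow> (real^'j) set) \<Rightarrow> real^'j^'i \<Rightarrow> real^'j \<Rightarrow> ereal" where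
  "penalty R \<mu> w = (SUP u\<in>acceptance_set R. ereal (w \<bullet> expect \<mu> u))"

end

theory Submission imports Defs begin

lemma inner_rv: "(n::real^'j::finite^'i::finite) \<bullet> y = (\<Sum>i\<in>UNIV. \<Sum>j\<in>UNIV. n$i$j * y$i$j)"
  by (simp add: inner_vec_def)

lemma inner_v: "(g::real^'j::finite) \<bullet> y = (\<Sum>j\<in>UNIV. g$j * y$j)"
  by (simp add: inner_vec_def)

lemma const_rv_diff: "const_rv (a - b) = const_rv a - const_rv b"
  by (simp add: const_rv_def vec_eq_iff)
lemma const_rv_add: "const_rv (a + b) = const_rv a + const_rv b"
  by (simp add: const_rv_def vec_eq_iff)
lemma const_rv_scale: "const_rv (c *\<^sub>R a) = c *\<^sub>R const_rv a"
  by (simp add: const_rv_def vec_eq_iff)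

lemma expect_diff: "expect \<mu> (a - b) = expect \<mu> a - expect \<mu> b"
  by (simp add: expect_def vec_eq_iff algebra_simps sum_subtractf)
lemma expect_scale: "expect \<mu> (c *\<^sub>R a) = c *\<^sub>R expect \<mu> a"
  by (simp add: expect_def vec_eq_iff algebra_simps sum_distrib_left)
lemma expect_const: "\<mu> \<in> M1 \<Longrightarrow> expect \<mu> (const_rv z) = z"
  by (simp add: expect_def const_rv_def vec_eq_iff M1_def flip: sum_distrib_right)

lemma risk_facts:
  assumes "mv_convex_risk_measure R"
  shows mem_iff: "\<And>u z. z \<in> R u \<longleftrightarrow> u - const_rv z \<in> acceptance_set R"
    and acc_convex: "convex (acceptance_set R)"
    and acc_closed: "closed (acceptance_set R)"
    and acc_down: "\<And>a w. a \<in> acceptance_set R \<Longrightarrow> rv_le w a \<Longrightarrow> w \<in> acceptance_set R"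
    and acc_ne: "acceptance_set R \<noteq> {}"
proof -
  note DD = assms[unfolded mv_convex_risk_measure_def]
  note D1 = conjunct1[OF DD, rule_format]
  note D2 = conjunct1[OF conjunct2[OF DD], rule_format]
  note D3 = conjunct1[OF conjunct2[OF conjunct2[OF DD]], rule_format]
  note D4 = conjunct1[OF conjunct2[OF conjunct2[OF conjunct2[OF DD]]], rule_format]
  note D5 = conjunct2[OF conjunct2[OF conjunct2[OF conjunct2[OF DD]]]]
  show mi: "z \<in> R u \<longleftrightarrow> u - const_rv z \<in> acceptance_set R" for u z
  proof -
    have "R (u + const_rv (-z)) = (\<lambda>x. x + - z) ` R u" by (rule D2)
    moreover have "u + const_rv (-z) = u - const_rv z" by (simp add: const_rv_def vec_eq_iff)
    ultimately have "R (u - const_rv z) = (\<lambda>x. x - z) ` R u" by simp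
    moreover have "0 \<in> (\<lambda>x. x - z) ` R u \<longleftrightarrow> z \<in> R u"
    proof
      assume "0 \<in> (\<lambda>x. x - z) ` R u"
      then obtain y where "y \<in> R u" "0 = y - z" by blast
      then show "z \<in> R u" by simp
    next
      assume "z \<in> R u"
      then show "0 \<in> (\<lambda>x. x - z) ` R u" by (rule image_eqI[rotated]) simp
    qed
    ultimately show ?thesis unfolding acceptance_set_def by simp
  qed
  show "closed (acceptance_set R)" by (rule D5)
  show "a \<in> acceptance_set R \<Longrightarrow> rv_le w a \<Longrightarrow> w \<in> acceptance_set R" for a w
    using D1 unfolding acceptance_set_def by blast
  show "acceptance_set R \<noteq> {}"
  proof -
    obtain z where "z \<in> R 0" using D3[of 0] by blast
    then show ?thesis using mi by blast
  qed
  show "convex (acceptance_set R)"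
  proof (rule convexI)
    fix x y and a b :: real
    assume x: "x \<in> acceptance_set R" and y: "y \<in> acceptance_set R" and ab0: "0 \<le> a" "0 \<le> b" "a + b = 1"
    then have ab: "0 \<le> a \<and> 0 \<le> b \<and> a + b = 1" by simp
    show "a *\<^sub>R x + b *\<^sub>R y \<in> acceptance_set R"
    proof (cases "a = 0 \<or> b = 0")
      case True then show ?thesis using ab x y by auto
    next
      case False
      then have g: "0 < a" "a < 1" "b = 1 - a" using ab by auto
      have m: "a *\<^sub>R 0 + (1 - a) *\<^sub>R 0 \<in> {a *\<^sub>R p + (1 - a) *\<^sub>R q |p q. p \<in> R x \<and> q \<in> R y}"
        using x y unfolding acceptance_set_def by blast
      have sub: "{a *\<^sub>R p + (1 - a) *\<^sub>R q |p q. p \<in> R x \<and> q \<in> R y} \<subseteq> R (a *\<^sub>R x + (1 - a) *\<^sub>R y)"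
        using D4 g(1,2) by simp
      have "a *\<^sub>R 0 + (1 - a) *\<^sub>R 0 \<in> R (a *\<^sub>R x + (1 - a) *\<^sub>R y)" by (rule subsetD[OF sub m])
      then have "0 \<in> R (a *\<^sub>R x + (1 - a) *\<^sub>R y)" by simp
      then show ?thesis using g unfolding acceptance_set_def by simp
    qed
  qed
qed

lemma build_dual:
  fixes n :: "real^'j::finite^'i::finite"
  assumes nn: "\<And>i j. 0 \<le> n$i$j" and nz: "n \<noteq> 0"
  shows "\<exists>\<mu> \<gamma> s. \<mu> \<in> M1 \<and> (\<forall>j. 0 \<le> \<gamma>$j) \<and> \<gamma> \<bullet> ones = 1 \<and> s > 0 \<and>
            (\<forall>y. \<gamma> \<bullet> expect \<mu> y = (n \<bullet> y) / s)"
proof -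
  define N where "N j = (\<Sum>i\<in>UNIV. n$i$j)" for j
  define s where "s = (\<Sum>j\<in>UNIV. N j)"
  have Nnn: "0 \<le> N j" for j unfolding N_def by (simp add: nn sum_nonneg)
  have N0: "N j = 0 \<Longrightarrow> n$i$j = 0" for i j
    unfolding N_def using sum_nonneg_eq_0_iff[of UNIV "\<lambda>i. n$i$j"] nn by auto
  obtain i0 j0 where "n$i0$j0 \<noteq> 0" using nz by (metis vec_eq_iff zero_index)
  then have "N j0 \<noteq> 0" using N0 by blast
  then have "N j0 > 0" using Nnn[of j0] by simp
  then have spos: "s > 0" unfolding s_def
    using sum_pos2[of UNIV j0 N] Nnn by auto
  define \<gamma> :: "real^'j" where "\<gamma> = (\<chi> j. N j / s)"
  define \<mu> :: "real^'j^'i" where "\<mu> = (\<chi> i j. if N j = 0 then 1 / real CARD('i) else n$i$j / N j)"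
  have mu: "\<mu> \<in> M1"
    unfolding M1_def
  proof (intro CollectI conjI allI)
    fix i j show "0 \<le> \<mu>$i$j" unfolding \<mu>_def using nn Nnn by simp
  next
    fix j show "(\<Sum>i\<in>UNIV. \<mu>$i$j) = 1"
    proof (cases "N j = 0")
      case True then show ?thesis unfolding \<mu>_def by simp
    next
      case False then show ?thesis unfolding \<mu>_def
        by (simp add: N_def flip: sum_divide_distrib)
    qed
  qed
  have gnn: "\<forall>j. 0 \<le> \<gamma>$j" unfolding \<gamma>_def using Nnn spos by simp
  have gone: "\<gamma> \<bullet> ones = 1" unfolding \<gamma>_def ones_def inner_v
    using spos by (simp add: s_def flip: sum_divide_distrib)
  have prod: "\<gamma>$j * \<mu>$i$j = n$i$j / s" for i j
  proof (cases "N j = 0")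
    case True then show ?thesis using N0 unfolding \<gamma>_def \<mu>_def by simp
  next
    case False then show ?thesis unfolding \<gamma>_def \<mu>_def by simp
  qed
  have key: "\<gamma> \<bullet> expect \<mu> y = (n \<bullet> y) / s" for y
  proof -
    have "\<gamma> \<bullet> expect \<mu> y = (\<Sum>j\<in>UNIV. \<Sum>i\<in>UNIV. (\<gamma>$j * \<mu>$i$j) * y$i$j)"
      unfolding inner_v expect_def by (simp add: sum_distrib_left mult.assoc)
    also have "\<dots> = (\<Sum>j\<in>UNIV. \<Sum>i\<in>UNIV. n$i$j * y$i$j / s)" by (simp add: prod)
    also have "\<dots> = (\<Sum>i\<in>UNIV. \<Sum>j\<in>UNIV. n$i$j * y$i$j) / s"
      by (subst sum.swap) (simp add: sum_divide_distrib)
    finally show ?thesis by (simp add: inner_rv)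
  qed
  have c: "\<mu> \<in> M1 \<and> (\<forall>j. 0 \<le> \<gamma>$j) \<and> \<gamma> \<bullet> ones = 1 \<and> s > 0 \<and>
            (\<forall>y. \<gamma> \<bullet> expect \<mu> y = (n \<bullet> y) / s)"
    apply (intro conjI allI)
        apply (rule mu)
       apply (rule gnn[rule_format])
      apply (rule gone)
     apply (rule spos)
    apply (rule key)
    done
  show ?thesis by (rule exI[of _ \<mu>], rule exI[of _ \<gamma>], rule exI[of _ s], rule c)
qed

theorem lemma5p5:
  fixes p :: "'i::finite \<Rightarrow> real"
    and R :: "real^'j::finite^'i \<Rightarrow> (real^'j) set"
    and v :: "real^'j"
    and u :: "real^'j^'i"
  assumes "CARD('i) \<ge> 2"
    and "\<And>i. p i > 0"
    and "(\<Sum>i\<in>UNIV. p i) = 1"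
    and "mv_convex_risk_measure R"
  shows "Inf {ereal \<alpha> | \<alpha>. v + \<alpha> *\<^sub>R ones \<in> R u}
       = Sup {ereal (\<gamma> \<bullet> (expect \<mu> u - v)) - penalty R \<mu> \<gamma> | \<mu> \<gamma>.
                \<mu> \<in> M1 \<and> (\<forall>j. 0 \<le> \<gamma>$j) \<and> \<gamma> \<bullet> ones = 1}"
proof -
  note RM = assms(4)
  define A where "A = acceptance_set R"
  define x where "x = u - const_rv v"
  define e :: "real^'j^'i" where "e = const_rv ones"
  define T where "T = {ereal \<alpha> | \<alpha>. v + \<alpha> *\<^sub>R ones \<in> R u}"
  define S where "S = {ereal (\<gamma> \<bullet> (expect \<mu> u - v)) - penalty R \<mu> \<gamma> | \<mu> \<gamma>.
                \<mu> \<in> M1 \<and> (\<forall>j. 0 \<le> \<gamma>$j) \<and> \<gamma> \<bullet> ones = 1}"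
  have memT: "v + \<alpha> *\<^sub>R ones \<in> R u \<longleftrightarrow> x - \<alpha> *\<^sub>R e \<in> A" for \<alpha>
    by (simp add: mem_iff[OF RM] A_def x_def e_def const_rv_add const_rv_scale algebra_simps)
  have tval: "\<gamma> \<bullet> (expect \<mu> u - v) = \<gamma> \<bullet> expect \<mu> x" if "\<mu> \<in> M1" for \<mu> \<gamma>
    using that by (simp add: x_def expect_diff expect_const)
  have eval: "\<gamma> \<bullet> expect \<mu> (y - \<alpha> *\<^sub>R e) = \<gamma> \<bullet> expect \<mu> y - \<alpha>"
    if "\<mu> \<in> M1" "\<gamma> \<bullet> ones = 1" for \<mu> \<gamma> y \<alpha>
    using that by (simp add: e_def expect_diff expect_scale expect_const inner_diff_right)
  have weak: "s \<le> t" if "s \<in> S" "t \<in> T" for s t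
  proof -
    from that(2) obtain \<alpha> where t: "t = ereal \<alpha>" and a: "x - \<alpha> *\<^sub>R e \<in> A"
      unfolding T_def memT by blast
    from that(1) obtain \<mu> \<gamma> where s: "s = ereal (\<gamma> \<bullet> (expect \<mu> u - v)) - penalty R \<mu> \<gamma>"
      and mu: "\<mu> \<in> M1" and g1: "\<gamma> \<bullet> ones = 1" unfolding S_def by blast
    have "ereal (\<gamma> \<bullet> expect \<mu> (x - \<alpha> *\<^sub>R e)) \<le> penalty R \<mu> \<gamma>"
      unfolding penalty_def using a A_def by (auto intro: SUP_upper)
    then have pen: "ereal (\<gamma> \<bullet> expect \<mu> x - \<alpha>) \<le> penalty R \<mu> \<gamma>"
      using eval[OF mu g1] by simp
    have "ereal (\<gamma> \<bullet> expect \<mu> x) - penalty R \<mu> \<gamma> \<le> ereal \<alpha>"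
    proof (cases "penalty R \<mu> \<gamma>")
      case (real r) then show ?thesis using pen by simp
    next
      case PInf then show ?thesis by simp
    next
      case MInf then show ?thesis using pen by simp
    qed
    then show ?thesis unfolding s t tval[OF mu] .
  qed
  have SleT: "Sup S \<le> Inf T"
  proof (rule Sup_least)
    fix s assume sS: "s \<in> S"
    show "s \<le> Inf T" by (rule Inf_greatest, rule weak[OF sS])
  qed
  have TleS: "Inf T \<le> Sup S"
  proof (rule ccontr)
    assume "\<not> Inf T \<le> Sup S"
    then have "Sup S < Inf T" by simp
    then obtain c where c1: "Sup S < ereal c" and c2: "ereal c < Inf T"
      using ereal_dense2 by blast
    have notA: "x - c *\<^sub>R e \<notin> A"
    proof
      assume "x - c *\<^sub>R e \<in> A"
      then have "ereal c \<in> T" unfolding T_def memT by blast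
      then have "Inf T \<le> ereal c" by (rule Inf_lower)
      then show False using c2 by simp
    qed
    have cvx: "convex A" "closed A" using acc_convex[OF RM] acc_closed[OF RM] A_def by auto
    obtain a b where ab1: "a \<bullet> (x - c *\<^sub>R e) < b" and ab2: "\<forall>y\<in>A. a \<bullet> y > b"
      using separating_hyperplane_closed_point[OF cvx notA] by blast
    define n where "n = - a"
    have n1: "n \<bullet> y < - b" if "y \<in> A" for y using ab2 that unfolding n_def by (simp add: inner_minus_left)
    have n2: "n \<bullet> (x - c *\<^sub>R e) > - b" using ab1 unfolding n_def by simp
    obtain a0 where a0: "a0 \<in> A" using acc_ne[OF RM] A_def by auto
    have nn: "0 \<le> n$i$j" for i j
    proof (rule ccontr)
      assume neg: "\<not> 0 \<le> n$i$j"
      define E :: "real^'j^'i" where "E = axis i (axis j 1)"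
      have nE: "n \<bullet> E = n$i$j" unfolding E_def by (simp add: inner_axis)
      define t where "t = (- b - n \<bullet> a0) / (- n$i$j)"
      have t0: "t \<ge> 0"
      proof -
        have "0 \<le> - b - n \<bullet> a0" using n1[OF a0] by simp
        moreover have "0 < - n$i$j" using neg by simp
        ultimately show ?thesis unfolding t_def by (rule divide_nonneg_pos)
      qed
      have "rv_le (a0 - t *\<^sub>R E) a0" unfolding rv_le_def E_def using t0 by (simp add: axis_def)
      then have "a0 - t *\<^sub>R E \<in> A" using acc_down[OF RM] a0 A_def by blast
      then have "n \<bullet> (a0 - t *\<^sub>R E) < - b" by (rule n1)
      moreover have "n \<bullet> (a0 - t *\<^sub>R E) = - b"
        using neg unfolding t_def by (simp add: inner_diff_right inner_add_right nE field_simps)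
      ultimately show False by simp
    qed
    have nz: "n \<noteq> 0" using n1[OF a0] n2 by auto
    obtain \<mu> \<gamma> s' where mu: "\<mu> \<in> M1" and gnn: "\<forall>j. 0 \<le> \<gamma>$j" and g1: "\<gamma> \<bullet> ones = 1"
      and sp: "s' > 0" and key: "\<And>y. \<gamma> \<bullet> expect \<mu> y = (n \<bullet> y) / s'"
      using build_dual[of n, OF nn nz] by blast
    have pen1: "penalty R \<mu> \<gamma> \<le> ereal (- b / s')"
      unfolding penalty_def
    proof (rule SUP_least)
      fix y assume "y \<in> acceptance_set R"
      then have "n \<bullet> y < - b" using n1 A_def by blast
      then have "n \<bullet> y / s' \<le> - b / s'" using sp divide_right_mono[of "n \<bullet> y" "- b" s'] by simp
      then show "ereal (\<gamma> \<bullet> expect \<mu> y) \<le> ereal (- b / s')" by (simp add: key)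
    qed
    have pen2: "ereal (\<gamma> \<bullet> expect \<mu> a0) \<le> penalty R \<mu> \<gamma>"
      unfolding penalty_def using a0 A_def by (auto intro: SUP_upper)
    obtain P where P: "penalty R \<mu> \<gamma> = ereal P" using pen1 pen2
      by (cases "penalty R \<mu> \<gamma>") auto
    have PB: "P \<le> - b / s'" using pen1 P by simp
    have "- b / s' < n \<bullet> (x - c *\<^sub>R e) / s'" using n2 sp divide_strict_right_mono[of "- b" "n \<bullet> (x - c *\<^sub>R e)" s'] by simp
    also have "\<dots> = \<gamma> \<bullet> expect \<mu> x - c" using key[of "x - c *\<^sub>R e"] eval[OF mu g1, of x c] by simp
    finally have lt: "c < \<gamma> \<bullet> expect \<mu> x - P" using PB by simp
    have mem: "ereal (\<gamma> \<bullet> (expect \<mu> u - v)) - penalty R \<mu> \<gamma> \<in> S"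
      unfolding S_def
      by (rule CollectI, rule exI[of _ \<mu>], rule exI[of _ \<gamma>], intro conjI refl mu gnn g1)
    have eqv: "ereal (\<gamma> \<bullet> expect \<mu> x - P) = ereal (\<gamma> \<bullet> (expect \<mu> u - v)) - penalty R \<mu> \<gamma>"
      using P tval[OF mu] by simp
    have "ereal c < ereal (\<gamma> \<bullet> expect \<mu> x - P)" using lt by simp
    also have "\<dots> = ereal (\<gamma> \<bullet> (expect \<mu> u - v)) - penalty R \<mu> \<gamma>" by (rule eqv)
    also have "\<dots> \<le> Sup S" by (rule Sup_upper[OF mem])
    finally have "ereal c < Sup S" .
    then show False using c1 by (rule less_asym)
  qed
  have "Inf T = Sup S" by (rule antisym[OF TleS SleT])
  then show ?thesis by (simp only: T_def S_def)
qed

end
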